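(* Let $I_n$ denote the number of inversion sequences of length $n$ avoiding all of the patterns $100,110,120,201,210$ (with $I_0=1$). Let $X=X(z)=1+2z+5z^2+17z^3+\cdots$ be the unique formal power series in $z$ satisfying $1-X+z-zX+2zX^2-z^2X^3=0$. Then $$\sum_{n\ge0}I_nz^n=\frac{(1+z)(X-1)-z(1-z)X^2}{z(1+z)X}.$$
   Context: An inversion sequence of length $n$ is an integer sequence $(a_1,\dots,a_n)$ with $0\le a_i<i$ for all $i$. A pattern is a sequence $\sigma$ of non-negative integers containing every value from $0$ to $\max(\sigma)$; the reduction of a sequence replaces its smallest values by $0$, the next smallest by $1$, etc. A sequence $a$ contains $\sigma$ if some (not necessarily consecutive) subsequence of $a$ has reduction $\sigma$; otherwise $a$ avoids $\sigma$. Equivalently, these are the inversion sequences with no $i<j<k$ such that $a_i>a_k$. *)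

theory Defs
  imports Main "HOL-Library.Sublist" "HOL-Computational_Algebra.Formal_Power_Series"
begin

text \<open>Inversion sequence of length n, stored 0-indexed: entry a!i (the paper's a_{i+1})
  satisfies 0 \<le> a!i < i+1.\<close>
definition inv_seq :: "nat \<Rightarrow> nat list \<Rightarrow> bool" where
  "inv_seq n a \<longleftrightarrow> length a = n \<and> (\<forall>i<n. a ! i < Suc i)"

definition reduction :: "nat list \<Rightarrow> nat list" where
  "reduction xs = map (\<lambda>x. card {y \<in> set xs. y < x}) xs"

definition contains_pattern :: "nat list \<Rightarrow> nat list \<Rightarrow> bool" where
  "contains_pattern a \<sigma> \<longleftrightarrow> (\<exists>s. subseq s a \<and> reduction s = \<sigma>)"

definition avoids :: "nat list \<Rightarrow> nat list \<Rightarrow> bool" where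
  "avoids a \<sigma> \<longleftrightarrow> \<not> contains_pattern a \<sigma>"

definition I_count :: "nat \<Rightarrow> nat" where
  "I_count n = card {a. inv_seq n a \<and>
     (\<forall>\<sigma>\<in>{[1,0,0],[1,1,0],[1,2,0],[2,0,1],[2,1,0]}. avoids a \<sigma>)}"

definition X_eq :: "rat fps \<Rightarrow> bool" where
  "X_eq X \<longleftrightarrow> 1 - X + fps_X - fps_X * X + 2 * fps_X * X^2 - fps_X^2 * X^3 = 0"

end

theory Submission
  imports Defs
begin

unbundle fps_syntax


definition Pat :: "nat list set" where
  "Pat = {[1,0,0],[1,1,0],[1,2,0],[2,0,1],[2,1,0]}"

definition good :: "nat list \<Rightarrow> bool" where
  "good a \<longleftrightarrow> \<not>(\<exists>x y w. subseq [x,y,w] a \<and> w < x)"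

lemma card_less_mono:
  fixes x w :: nat
  assumes "finite A" "x \<le> w"
  shows "card {y\<in>A. y < x} \<le> card {y\<in>A. y < w}"
  using assms by (intro card_mono) auto

lemma contains_imp:
  assumes "\<sigma> \<in> Pat" "contains_pattern a \<sigma>"
  shows "\<exists>x y w. subseq [x,y,w] a \<and> w < x"
proof -
  obtain s where s: "subseq s a" "reduction s = \<sigma>"
    using assms(2) unfolding contains_pattern_def by blast
  have "length s = 3" using s(2) assms(1) unfolding Pat_def reduction_def
    by (auto dest: arg_cong[where f=length])
  then obtain x y w where sxyw: "s = [x,y,w]"
    by (auto simp: numeral_3_eq_3 length_Suc_conv)
  have "\<sigma> ! 2 < \<sigma> ! 0" using assms(1) unfolding Pat_def by auto
  hence "card {v\<in>set s. v < w} < card {v\<in>set s. v < x}"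
    using s(2) unfolding reduction_def sxyw by auto
  hence "w < x" using card_less_mono[of "set s" x w] by force
  thus ?thesis using s(1) sxyw by blast
qed

lemma red3: "reduction [x,y,w] = [card {v\<in>{x,y,w}. v < x}, card {v\<in>{x,y,w}. v < y}, card {v\<in>{x,y,w}. v < (w::nat)}]"
  unfolding reduction_def by simp

lemma imp_contains:
  fixes x y w :: nat
  assumes "subseq [x,y,w] a" "w < x"
  shows "\<exists>\<sigma>\<in>Pat. contains_pattern a \<sigma>"
proof -
  have "reduction [x,y,w] \<in> Pat"
  proof (cases "y < w")
    case True
    have "{v\<in>{x,y,w}. v < x} = {y,w}" "{v\<in>{x,y,w}. v < y} = {}" "{v\<in>{x,y,w}. v < w} = {y}"
      using True assms(2) by auto
    thus ?thesis using True unfolding red3 Pat_def by simp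
  next
    case f1: False
    show ?thesis
    proof (cases "y = w")
      case True
      have "{v\<in>{x,y,w}. v < x} = {w}" "{v\<in>{x,y,w}. v < y} = {}" "{v\<in>{x,y,w}. v < w} = {}"
        using True assms(2) by auto
      thus ?thesis using True unfolding red3 Pat_def by simp
    next
      case f2: False
      show ?thesis
      proof (cases "y < x")
        case True
        have "{v\<in>{x,y,w}. v < x} = {y,w}" "{v\<in>{x,y,w}. v < y} = {w}" "{v\<in>{x,y,w}. v < w} = {}"
          using True f1 f2 assms(2) by auto
        thus ?thesis using True f1 f2 unfolding red3 Pat_def by simp
      next
        case f3: False
        show ?thesis
        proof (cases "y = x")
          case True
          have "{v\<in>{x,y,w}. v < x} = {w}" "{v\<in>{x,y,w}. v < y} = {w}" "{v\<in>{x,y,w}. v < w} = {}"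
            using True assms(2) by auto
          thus ?thesis using True unfolding red3 Pat_def by simp
        next
          case False
          have "{v\<in>{x,y,w}. v < x} = {w}" "{v\<in>{x,y,w}. v < y} = {x,w}" "{v\<in>{x,y,w}. v < w} = {}"
            using False f3 f1 assms(2) by auto
          thus ?thesis using False f3 assms(2) unfolding red3 Pat_def by simp
        qed
      qed
    qed
  qed
  thus ?thesis using assms(1) unfolding contains_pattern_def by blast
qed

lemma avoid_iff_good:
  "(\<forall>\<sigma>\<in>{[1,0,0],[1,1,0],[1,2,0],[2,0,1],[2,1,0]}. avoids a \<sigma>) \<longleftrightarrow> good a"
  using contains_imp[of _ a] imp_contains[of _ _ _ a]
  unfolding avoids_def good_def Pat_def[symmetric] by blast

lemma subseq_snoc:
  "subseq xs (ys@[c]) \<longleftrightarrow> subseq xs ys \<or> (\<exists>xs'. xs = xs'@[c] \<and> subseq xs' ys)"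
proof
  assume "subseq xs (ys@[c])"
  then obtain xs1 xs2 where h: "xs = xs1 @ xs2" "subseq xs1 ys" "subseq xs2 [c]"
    by (auto simp: subseq_append_iff)
  have "xs2 = [] \<or> xs2 = [c]" using h(3)
    by (cases xs2) (auto simp: subseq_Cons2_iff split: if_splits)
  thus "subseq xs ys \<or> (\<exists>xs'. xs = xs'@[c] \<and> subseq xs' ys)" using h by auto
next
  assume "subseq xs ys \<or> (\<exists>xs'. xs = xs'@[c] \<and> subseq xs' ys)"
  thus "subseq xs (ys@[c])"
    by (auto intro: subseq_rev_drop_many list_emb_append_mono)
qed

lemma ex_subseq2: "(\<exists>y. subseq [x,y] p) \<longleftrightarrow> x \<in> set (butlast p)"
proof (induction p rule: rev_induct)
  case Nil
  then show ?case by simp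
next
  case (snoc d p)
  have "(\<exists>y. subseq [x,y] (p@[d])) \<longleftrightarrow> (\<exists>y. subseq [x,y] p) \<or> subseq [x] p"
    by (auto simp: subseq_snoc)
  also have "\<dots> \<longleftrightarrow> x \<in> set p" using snoc.IH subseq_singleton_left[of x p]
    by (auto dest: in_set_butlastD)
  finally show ?case by simp
qed

lemma good_snoc: "good (p@[c]) \<longleftrightarrow> good p \<and> (\<forall>x\<in>set (butlast p). x \<le> c)"
proof -
  have "good (p@[c]) \<longleftrightarrow> \<not>(\<exists>x y w. (subseq [x,y,w] p \<or> (w = c \<and> subseq [x,y] p)) \<and> w < x)"
    unfolding good_def subseq_snoc by (auto simp: append_eq_Cons_conv Cons_eq_append_conv)
  also have "\<dots> \<longleftrightarrow> good p \<and> \<not>(\<exists>x y. subseq [x,y] p \<and> c < x)"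
    unfolding good_def by blast
  also have "\<dots> \<longleftrightarrow> good p \<and> (\<forall>x\<in>set (butlast p). x \<le> c)"
    using ex_subseq2 by (metis not_le)
  finally show ?thesis .
qed



definition mx :: "nat list \<Rightarrow> nat" where
  "mx xs = foldl max 0 xs"

lemma mx_snoc: "mx (xs@[c]) = max (mx xs) c"
  unfolding mx_def by simp

lemma mx_le_iff: "mx xs \<le> c \<longleftrightarrow> (\<forall>x\<in>set xs. x \<le> c)"
  by (induction xs rule: rev_induct) (auto simp: mx_snoc, simp add: mx_def)



definition V :: "nat \<Rightarrow> nat list set" where
  "V n = {a. inv_seq n a \<and> good a}"

lemma V_elem: "a \<in> V n \<Longrightarrow> x \<in> set a \<Longrightarrow> x < n"
proof -
  assume "a \<in> V n" "x \<in> set a"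
  then obtain i where "i < n" "a ! i = x" "a!i < Suc i" "length a = n"
    unfolding V_def inv_seq_def in_set_conv_nth by auto
  thus "x < n" by simp
qed

lemma finite_V: "finite (V n)"
proof -
  have "V n \<subseteq> {xs. set xs \<subseteq> {0..<n} \<and> length xs = n}"
    using V_elem by (auto simp: V_def inv_seq_def)
  thus ?thesis by (rule finite_subset) (simp add: finite_lists_length_eq)
qed

lemma inv_seq_snoc: "inv_seq (Suc n) (p@[c]) \<longleftrightarrow> inv_seq n p \<and> c \<le> n"
proof
  assume h: "inv_seq (Suc n) (p@[c])"
  hence l: "length p = n" unfolding inv_seq_def by simp
  have "\<forall>i<n. p!i < Suc i"
  proof (intro allI impI)
    fix i assume "i < n"
    thus "p!i < Suc i" using h l unfolding inv_seq_def
      by (metis less_SucI nth_append)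
  qed
  moreover have "c < Suc n" using h l unfolding inv_seq_def
    by (metis lessI nth_append_length)
  ultimately show "inv_seq n p \<and> c \<le> n" using l unfolding inv_seq_def by simp
next
  assume h: "inv_seq n p \<and> c \<le> n"
  show "inv_seq (Suc n) (p@[c])" unfolding inv_seq_def
  proof (intro conjI allI impI)
    show "length (p @ [c]) = Suc n" using h unfolding inv_seq_def by simp
    fix i assume "i < Suc n"
    thus "(p @ [c]) ! i < Suc i" using h unfolding inv_seq_def
      by (cases "i < n") (auto simp: nth_append)
  qed
qed

lemma snoc_in_V: "p@[c] \<in> V (Suc n) \<longleftrightarrow> p \<in> V n \<and> c \<le> n \<and> mx (butlast p) \<le> c"
  unfolding V_def by (auto simp: inv_seq_snoc good_snoc mx_le_iff)

lemma V_length: "a \<in> V n \<Longrightarrow> length a = n"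
  unfolding V_def inv_seq_def by auto

lemma V_Suc_snoc: "a \<in> V (Suc n) \<Longrightarrow> a = butlast a @ [last a]"
  using V_length by (metis Zero_not_Suc append_butlast_last_id list.size(3))

lemma V_mx: "a \<in> V n \<Longrightarrow> n \<ge> 1 \<Longrightarrow> mx a < n"
proof -
  assume "a \<in> V n" "n \<ge> 1"
  hence "\<forall>x\<in>set a. x \<le> n - 1" using V_elem by fastforce
  hence "mx a \<le> n - 1" using mx_le_iff by blast
  thus "mx a < n" using \<open>n \<ge> 1\<close> by linarith
qed

definition S :: "nat \<Rightarrow> nat \<Rightarrow> nat \<Rightarrow> nat list set" where
  "S n M b = {a\<in>V n. mx (butlast a) = M \<and> last a = b}"

definition cnt :: "nat \<Rightarrow> nat \<Rightarrow> nat \<Rightarrow> nat" where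
  "cnt n M b = card (S n M b)"

lemma finite_S: "finite (S n M b)"
  unfolding S_def using finite_V by simp

lemma S_Suc_eq:
  assumes "n \<ge> 1" "c \<le> n"
  shows "S (Suc n) M' c = (\<lambda>p. p@[c]) ` ((if M' \<le> c then (\<Union>b\<in>{..M'}. S n M' b) else {})
            \<union> (\<Union>M\<in>{..<min M' (Suc c)}. S n M M'))" (is "_ = _ ` (?A1 \<union> ?A2)")
proof (intro set_eqI iffI)
  fix a assume a: "a \<in> S (Suc n) M' c"
  define p where "p = butlast a"
  have aV: "a \<in> V (Suc n)" and la: "last a = c" and ma: "mx (butlast a) = M'"
    using a unfolding S_def by auto
  have ap: "a = p @ [c]" using V_Suc_snoc[OF aV] la unfolding p_def by simp
  have pV: "p \<in> V n" and pc: "mx (butlast p) \<le> c"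
    using aV unfolding ap snoc_in_V by auto
  have mxp: "mx p = M'" using ma unfolding p_def .
  have "p \<noteq> []" using pV V_length assms(1) by fastforce
  hence "p = butlast p @ [last p]" by simp
  hence mm: "max (mx (butlast p)) (last p) = M'" using mxp mx_snoc by metis
  have "p \<in> ?A1 \<union> ?A2"
  proof (cases "mx (butlast p) = M'")
    case True
    hence "last p \<le> M'" "M' \<le> c" using mm pc by auto
    hence "p \<in> S n M' (last p)" "last p \<in> {..M'}" using pV True unfolding S_def by auto
    thus ?thesis using \<open>M' \<le> c\<close> by auto
  next
    case False
    hence "last p = M'" "mx (butlast p) < M'" using mm by (auto simp: max_def split: if_splits)
    hence "p \<in> S n (mx (butlast p)) M'" "mx (butlast p) \<in> {..<min M' (Suc c)}"
      using pV pc unfolding S_def by auto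
    thus ?thesis by blast
  qed
  thus "a \<in> (\<lambda>p. p@[c]) ` (?A1 \<union> ?A2)" using ap by blast
next
  fix a assume "a \<in> (\<lambda>p. p@[c]) ` (?A1 \<union> ?A2)"
  then obtain p where ap: "a = p @ [c]" and p: "p \<in> ?A1 \<union> ?A2" by blast
  have pV: "p \<in> V n" using p unfolding S_def by (auto split: if_splits)
  have "p \<noteq> []" using pV V_length assms(1) by fastforce
  hence pe: "p = butlast p @ [last p]" by simp
  have h: "mx (butlast p) \<le> c \<and> max (mx (butlast p)) (last p) = M'"
  proof (cases "p \<in> ?A1")
    case True
    then obtain b where "M' \<le> c" "b \<le> M'" "p \<in> S n M' b" by (auto split: if_splits)
    thus ?thesis unfolding S_def by auto
  next
    case False
    then obtain M where "M < M'" "M \<le> c" "p \<in> S n M M'" using p by auto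
    thus ?thesis unfolding S_def by auto
  qed
  hence "mx (butlast p) \<le> c" "mx p = M'" using pe mx_snoc by metis+
  moreover have "butlast a = p" "last a = c" unfolding ap by simp_all
  ultimately show "a \<in> S (Suc n) M' c" unfolding S_def ap using pV assms(2) snoc_in_V by simp
qed

lemma cnt_rec:
  assumes "n \<ge> 1"
  shows "cnt (Suc n) M' c = (if c \<le> n then (if M' \<le> c then (\<Sum>b\<le>M'. cnt n M' b) else 0)
            + (\<Sum>M<min M' (Suc c). cnt n M M') else 0)"
proof (cases "c \<le> n")
  case False
  have "S (Suc n) M' c = {}"
  proof (rule ccontr)
    assume "S (Suc n) M' c \<noteq> {}"
    then obtain a where a: "a \<in> S (Suc n) M' c" by blast
    hence "a = butlast a @ [c]" using V_Suc_snoc unfolding S_def by auto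
    hence "c \<le> n" using a snoc_in_V unfolding S_def by (metis (no_types, lifting) mem_Collect_eq)
    thus False using False by simp
  qed
  thus ?thesis using False unfolding cnt_def by simp
next
  case True
  let ?A1 = "(if M' \<le> c then (\<Union>b\<in>{..M'}. S n M' b) else {})"
  let ?A2 = "(\<Union>M\<in>{..<min M' (Suc c)}. S n M M')"
  have "cnt (Suc n) M' c = card ((\<lambda>p. p@[c]) ` (?A1 \<union> ?A2))"
    unfolding cnt_def S_Suc_eq[OF assms True] ..
  also have "\<dots> = card (?A1 \<union> ?A2)"
    by (rule card_image) (simp add: inj_on_def)
  also have "\<dots> = card ?A1 + card ?A2"
  proof (rule card_Un_disjoint)
    show "finite ?A1" using finite_S by simp
    show "finite ?A2" using finite_S by simp
    show "?A1 \<inter> ?A2 = {}"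
    proof (rule ccontr)
      assume "?A1 \<inter> ?A2 \<noteq> {}"
      then obtain p b M where "p \<in> S n M' b" "p \<in> S n M M'" "M < M'"
        by (auto split: if_splits)
      thus False unfolding S_def by auto
    qed
  qed
  also have "card ?A1 = (if M' \<le> c then (\<Sum>b\<le>M'. cnt n M' b) else 0)"
  proof (cases "M' \<le> c")
    case True
    have "card (\<Union>b\<in>{..M'}. S n M' b) = (\<Sum>b\<le>M'. cnt n M' b)"
      unfolding cnt_def
    proof (rule card_UN_disjoint)
      show "\<forall>i\<in>{..M'}. \<forall>j\<in>{..M'}. i \<noteq> j \<longrightarrow> S n M' i \<inter> S n M' j = {}"
        unfolding S_def by blast
    qed (auto simp: finite_S)
    thus ?thesis using True by simp
  qed simp
  also have "card ?A2 = (\<Sum>M<min M' (Suc c). cnt n M M')"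
    unfolding cnt_def
  proof (rule card_UN_disjoint)
    show "\<forall>i\<in>{..<min M' (Suc c)}. \<forall>j\<in>{..<min M' (Suc c)}. i \<noteq> j \<longrightarrow> S n i M' \<inter> S n j M' = {}"
      unfolding S_def by blast
  qed (auto simp: finite_S)
  finally show ?thesis using True by simp
qed

lemma V_one: "V 1 = {[0]}"
proof -
  have "inv_seq 1 a \<longleftrightarrow> a = [0]" for a
    unfolding inv_seq_def by (auto simp: length_Suc_conv)
  moreover have "good [0]" unfolding good_def
    by (auto simp: subseq_Cons2_iff split: if_splits)
  ultimately show ?thesis unfolding V_def by auto
qed

lemma cnt_one: "cnt 1 M b = (if M = 0 \<and> b = 0 then 1 else 0)"
proof -
  have "S 1 M b = (if M = 0 \<and> b = 0 then {[0]} else {})"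
    unfolding S_def V_one by (auto simp: mx_def)
  thus ?thesis unfolding cnt_def by simp
qed

lemma V_zero: "V 0 = {[]}"
  unfolding V_def inv_seq_def good_def by auto

lemma card_V:
  assumes "n \<ge> 1"
  shows "card (V n) = (\<Sum>M'<n. cnt (Suc n) M' n)"
proof -
  have "(\<lambda>p. p@[n]) ` V n = (\<Union>M'\<in>{..<n}. S (Suc n) M' n)"
  proof (intro set_eqI iffI)
    fix a assume "a \<in> (\<lambda>p. p@[n]) ` V n"
    then obtain p where p: "p \<in> V n" "a = p@[n]" by blast
    have "mx p < n" using V_mx p(1) assms by blast
    moreover have "\<forall>x\<in>set (butlast p). x \<le> n"
      using p(1) V_elem by (meson in_set_butlastD less_imp_le)
    hence "mx (butlast p) \<le> n" using mx_le_iff by blast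
    ultimately have "a \<in> S (Suc n) (mx p) n" "mx p \<in> {..<n}"
      using p snoc_in_V unfolding S_def by auto
    thus "a \<in> (\<Union>M'\<in>{..<n}. S (Suc n) M' n)" by blast
  next
    fix a assume "a \<in> (\<Union>M'\<in>{..<n}. S (Suc n) M' n)"
    then obtain M' where a: "a \<in> S (Suc n) M' n" by blast
    hence aV: "a \<in> V (Suc n)" "last a = n" unfolding S_def by auto
    hence ae: "a = butlast a @ [n]" using V_Suc_snoc by metis
    hence "butlast a \<in> V n" using aV(1) snoc_in_V by metis
    thus "a \<in> (\<lambda>p. p@[n]) ` V n" using ae by blast
  qed
  hence "card ((\<lambda>p. p@[n]) ` V n) = (\<Sum>M'<n. cnt (Suc n) M' n)"
    unfolding cnt_def
    by (simp only:) (rule card_UN_disjoint, auto simp: finite_S, auto simp: S_def)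
  moreover have "card ((\<lambda>p. p@[n]) ` V n) = card (V n)"
    by (rule card_image) (simp add: inj_on_def)
  ultimately show ?thesis by simp
qed

lemma I_count_V: "I_count n = card (V n)"
  unfolding I_count_def V_def using avoid_iff_good by simp




definition cc :: "rat fps \<Rightarrow> rat fps" where "cc X = fps_X * X"
definition ww :: "rat fps \<Rightarrow> rat fps" where "ww X = inverse (1 - cc X)"
definition aa :: "rat fps \<Rightarrow> rat fps" where
  "aa X = (1 - cc X) * inverse (1 - cc X - fps_X)"

lemma cc_power_nth: "N < m \<Longrightarrow> (g * cc X ^ m) $ N = 0"
proof -
  assume "N < m"
  have e: "cc X ^ m = fps_X ^ m * X ^ m"
    unfolding cc_def by (simp add: power_mult_distrib)
  have "g * cc X ^ m = fps_X ^ m * (g * X ^ m)"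
    unfolding e by (simp add: mult.left_commute)
  thus ?thesis using \<open>N < m\<close> by (simp only: fps_X_power_mult_nth) simp
qed

lemma ww_eq: "ww X = 1 + ww X * cc X"
proof -
  have "(1 - cc X) $ 0 \<noteq> 0" unfolding cc_def by simp
  hence "ww X * (1 - cc X) = 1" unfolding ww_def by (rule inverse_mult_eq_1)
  thus ?thesis by (simp add: algebra_simps)
qed

lemma trunc:
  assumes "K \<le> Suc N"
  shows "(\<Sum>i<K. (f * cc X ^ (N - i)) $ N) = (f * ww X * cc X ^ (Suc N - K)) $ N"
  using assms
proof (induction K)
  case 0
  then show ?case using cc_power_nth[of N "Suc N" "f * ww X" X] by simp
next
  case (Suc K)
  hence K: "K \<le> N" by simp
  have "(\<Sum>i<Suc K. (f * cc X ^ (N - i)) $ N)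
      = (f * ww X * cc X ^ (Suc N - K)) $ N + (f * cc X ^ (N - K)) $ N"
    using Suc by simp
  also have "\<dots> = (f * ww X * cc X ^ (N - K)) $ N"
  proof -
    have e: "Suc N - K = Suc (N - K)" using K by simp
    have "f * ww X * cc X ^ (N - K) = f * (1 + ww X * cc X) * cc X ^ (N - K)"
      using ww_eq[of X] by simp
    also have "\<dots> = f * ww X * cc X ^ (Suc N - K) + f * cc X ^ (N - K)"
      unfolding e by (simp add: algebra_simps)
    finally show ?thesis by simp
  qed
  finally show ?case using K by (simp add: Suc_diff_le)
qed

lemma aa_eq: "aa X = 1 + fps_X * aa X * ww X"
proof -
  have d: "(1 - cc X - fps_X) $ 0 \<noteq> 0" unfolding cc_def by simp
  have "inverse (1 - cc X - fps_X) * (1 - cc X - fps_X) = 1"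
    using inverse_mult_eq_1[OF d] .
  hence h1: "aa X * (1 - cc X - fps_X) = 1 - cc X"
    unfolding aa_def by (simp add: mult.assoc)
  have "(1 - cc X) $ 0 \<noteq> 0" unfolding cc_def by simp
  hence h2: "ww X * (1 - cc X) = 1" unfolding ww_def by (rule inverse_mult_eq_1)
  have "aa X * (ww X * (1 - cc X)) - fps_X * aa X * ww X = ww X * (1 - cc X)"
    using arg_cong[OF h1, of "\<lambda>t. t * ww X"] by (simp add: algebra_simps)
  hence "aa X - fps_X * aa X * ww X = 1" unfolding h2 by simp
  thus ?thesis by (simp add: algebra_simps)
qed

lemma aa_0: "aa X $ 0 = 1"
  using arg_cong[OF aa_eq[of X], of "\<lambda>f. f $ 0"] by simp

lemma aa_Suc: "aa X $ Suc n = (aa X * ww X) $ n"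
proof -
  have "aa X $ Suc n = (1 + fps_X * (aa X * ww X)) $ Suc n"
    using aa_eq[of X] by (simp add: mult.assoc)
  thus ?thesis by simp
qed

lemma X_eq_G: "X_eq X \<longleftrightarrow> X = 1 + fps_X * (1 - X + 2 * X^2 - fps_X * X^3)"
proof -
  have e: "1 - X + fps_X - fps_X * X + 2 * fps_X * X^2 - fps_X^2 * X^3
      = (1 + fps_X * (1 - X + 2 * X^2 - fps_X * X^3)) - X"
    by (simp add: algebra_simps power2_eq_square power3_eq_cube)
  show ?thesis unfolding X_eq_def e right_minus_eq by (rule eq_commute)
qed

lemma cubic:
  assumes "X_eq X"
  shows "cc X = fps_X * ww X + fps_X^2 * ww X^2"
proof -
  have h2: "ww X * (1 - cc X) = 1" unfolding ww_def
    by (rule inverse_mult_eq_1) (simp add: cc_def)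
  have "X * (1 - cc X)^2 - ((1 - cc X) + fps_X)
     = - (1 - X + fps_X - fps_X * X + 2 * fps_X * X^2 - fps_X^2 * X^3)"
    unfolding cc_def by (simp add: algebra_simps power2_eq_square power3_eq_cube)
  hence Y: "X * (1 - cc X)^2 = (1 - cc X) + fps_X"
    using assms unfolding X_eq_def by simp
  have "cc X = fps_X * X * (ww X * (1 - cc X))^2"
    by (simp only: h2) (simp add: cc_def)
  also have "\<dots> = fps_X * ww X^2 * (X * (1 - cc X)^2)"
    by (simp add: power_mult_distrib mult_ac)
  also have "\<dots> = fps_X * ww X * (ww X * (1 - cc X)) + fps_X^2 * ww X^2"
    unfolding Y by (simp add: algebra_simps power2_eq_square)
  finally show ?thesis unfolding h2 by simp
qed




definition FF :: "rat fps \<Rightarrow> nat \<Rightarrow> nat \<Rightarrow> nat \<Rightarrow> rat" where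
  "FF X N M b = (if M \<le> N then (if M \<le> b then (if b \<le> Suc N then (aa X * cc X ^ (N - M)) $ N else 0)
      else (aa X * ww X * cc X ^ (N - 1 - b)) $ (N - 1)) else 0)"

lemma L1:
  assumes "M' \<le> Suc N"
  shows "(\<Sum>M<min M' (Suc c). FF X N M M') = (aa X * ww X * cc X ^ (Suc N - min M' (Suc c))) $ N"
proof -
  have "(\<Sum>M<min M' (Suc c). FF X N M M') = (\<Sum>M<min M' (Suc c). (aa X * cc X ^ (N - M)) $ N)"
    by (rule sum.cong) (use assms in \<open>auto simp: FF_def\<close>)
  also have "\<dots> = (aa X * ww X * cc X ^ (Suc N - min M' (Suc c))) $ N"
    by (rule trunc) (use assms in auto)
  finally show ?thesis .
qed

lemma L2:
  assumes "Suc N < M'"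
  shows "(\<Sum>M<min M' (Suc c). FF X N M M') = 0"
  by (rule sum.neutral) (use assms in \<open>auto simp: FF_def\<close>)

lemma L3:
  assumes "N < M'"
  shows "(\<Sum>b\<le>M'. FF X N M' b) = 0"
  by (rule sum.neutral) (use assms in \<open>auto simp: FF_def\<close>)

lemma L4:
  assumes "M' \<le> N"
  shows "(\<Sum>b\<le>M'. FF X N M' b) = (\<Sum>b<M'. (aa X * ww X * cc X ^ (N - 1 - b)) $ (N - 1))
           + (aa X * cc X ^ (N - M')) $ N"
proof -
  have "(\<Sum>b\<le>M'. FF X N M' b) = (\<Sum>b<M'. FF X N M' b) + FF X N M' M'"
    by (simp add: lessThan_Suc_atMost[symmetric])
  also have "(\<Sum>b<M'. FF X N M' b) = (\<Sum>b<M'. (aa X * ww X * cc X ^ (N - 1 - b)) $ (N - 1))"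
    by (rule sum.cong) (use assms in \<open>auto simp: FF_def\<close>)
  also have "FF X N M' M' = (aa X * cc X ^ (N - M')) $ N"
    using assms by (simp add: FF_def)
  finally show ?thesis .
qed

lemma L5:
  assumes "M' \<le> N"
  shows "(\<Sum>b<M'. (aa X * ww X * cc X ^ (N - 1 - b)) $ (N - 1))
       = (fps_X^2 * (aa X * ww X * ww X * cc X ^ (N - M'))) $ Suc N"
proof (cases N)
  case 0
  then show ?thesis using assms by (simp add: fps_X_power_mult_nth)
next
  case (Suc N0)
  have "(\<Sum>b<M'. (aa X * ww X * cc X ^ (N0 - b)) $ N0) = (aa X * ww X * ww X * cc X ^ (Suc N0 - M')) $ N0"
    by (rule trunc) (use assms Suc in auto)
  then show ?thesis using Suc by (simp add: fps_X_power_mult_nth)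
qed

lemma key_id:
  assumes "X_eq X"
  shows "aa X * cc X ^ Suc j = fps_X * (aa X * cc X ^ j) + fps_X^2 * (aa X * ww X * ww X * cc X ^ j)
          + fps_X * (aa X * ww X * cc X ^ Suc j)"
proof -
  have c: "cc X = fps_X * ww X + fps_X^2 * ww X^2" using cubic[OF assms] .
  have w: "ww X = 1 + ww X * cc X" by (rule ww_eq)
  have "aa X * cc X ^ Suc j = aa X * cc X ^ j * (fps_X * ww X + fps_X^2 * ww X^2)"
    by (subst c[symmetric]) (simp add: mult_ac)
  also have "\<dots> = aa X * cc X ^ j * (fps_X * (1 + ww X * cc X) + fps_X^2 * ww X^2)"
    by (subst w) simp
  also have "\<dots> = fps_X * (aa X * cc X ^ j) + fps_X^2 * (aa X * ww X * ww X * cc X ^ j)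
          + fps_X * (aa X * ww X * cc X ^ Suc j)"
    by (simp add: algebra_simps power2_eq_square)
  finally show ?thesis .
qed

lemma cnt_formula:
  assumes "X_eq X"
  shows "of_nat (cnt (Suc (Suc N)) M b) = FF X N M b"
proof (induction N arbitrary: M b)
  case 0
  have c1: "cnt (Suc 0) M0 b0 = (if M0 = 0 \<and> b0 = 0 then 1 else 0)" for M0 b0
    using cnt_one by simp
  have r: "cnt (Suc 1) M b = (if b \<le> 1 then (if M \<le> b then (\<Sum>b'\<le>M. cnt 1 M b') else 0)
            + (\<Sum>M0<min M (Suc b). cnt 1 M0 M) else 0)"
    by (rule cnt_rec) simp
  show ?case
  proof (cases "M = 0")
    case True
    then show ?thesis using r by (simp add: c1 FF_def aa_0)
  next
    case False
    have "(\<Sum>b'\<le>M. cnt 1 M b') = 0" using False by (simp add: c1)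
    moreover have "(\<Sum>M0<min M (Suc b). cnt 1 M0 M) = 0" using False by (simp add: c1)
    ultimately show ?thesis using r False by (simp add: FF_def)
  qed
next
  case (Suc N)
  note IH = Suc.IH
  have r: "cnt (Suc (Suc (Suc N))) M b = (if b \<le> Suc (Suc N) then (if M \<le> b then (\<Sum>b'\<le>M. cnt (Suc (Suc N)) M b') else 0)
            + (\<Sum>M0<min M (Suc b). cnt (Suc (Suc N)) M0 M) else 0)"
    by (rule cnt_rec) simp
  have R: "(of_nat (cnt (Suc (Suc (Suc N))) M b) :: rat) =
     (if b \<le> Suc (Suc N) then (if M \<le> b then (\<Sum>b'\<le>M. FF X N M b') else 0)
            + (\<Sum>M0<min M (Suc b). FF X N M0 M) else 0)"
    unfolding r by (simp add: of_nat_sum IH)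
  show ?case
  proof (cases "b \<le> Suc (Suc N)")
    case False
    thus ?thesis unfolding R by (auto simp: FF_def)
  next
    case bN: True
    show ?thesis
    proof (cases "Suc N < M")
      case True
      thus ?thesis unfolding R using L2[OF True] L3[of N M] by (auto simp: FF_def)
    next
      case MN: False
      hence M1: "M \<le> Suc N" by simp
      show ?thesis
      proof (cases "M \<le> b")
        case Mb: True
        hence mn: "min M (Suc b) = M" by simp
        show ?thesis
        proof (cases "M = Suc N")
          case True
          have "(of_nat (cnt (Suc (Suc (Suc N))) M b) :: rat) = (aa X * ww X * cc X ^ 0) $ N"
            unfolding R using bN Mb L3[of N M] L1[OF M1, of X b] True mn by simp
          also have "\<dots> = aa X $ Suc N" by (simp add: aa_Suc)
          finally show ?thesis using True bN Mb by (simp add: FF_def)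
        next
          case False
          hence MN': "M \<le> N" using M1 by simp
          have e: "Suc N - M = Suc (N - M)" using MN' by simp
          have "(of_nat (cnt (Suc (Suc (Suc N))) M b) :: rat) =
             (fps_X^2 * (aa X * ww X * ww X * cc X ^ (N - M))) $ Suc N + (aa X * cc X ^ (N - M)) $ N
             + (aa X * ww X * cc X ^ (Suc N - M)) $ N"
            unfolding R using bN Mb L4[OF MN', of X] L5[OF MN', of X] L1[OF M1, of X b] mn by simp
          also have "\<dots> = (fps_X * (aa X * cc X ^ (N - M)) + fps_X^2 * (aa X * ww X * ww X * cc X ^ (N - M))
          + fps_X * (aa X * ww X * cc X ^ Suc (N - M))) $ Suc N"
            unfolding e by simp
          also have "\<dots> = (aa X * cc X ^ Suc (N - M)) $ Suc N"
            using key_id[OF assms, of "N - M"] by simp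
          finally show ?thesis using bN Mb M1 e by (simp add: FF_def)
        qed
      next
        case Mb: False
        hence mn: "min M (Suc b) = Suc b" by simp
        have "(of_nat (cnt (Suc (Suc (Suc N))) M b) :: rat) = (aa X * ww X * cc X ^ (Suc N - Suc b)) $ N"
          unfolding R using bN Mb L1[OF M1, of X b] mn by simp
        thus ?thesis using M1 Mb by (simp add: FF_def)
      qed
    qed
  qed
qed

lemma I_count_coeff:
  assumes "X_eq X"
  shows "of_nat (I_count n) = aa X $ n"
proof (cases n)
  case 0
  then show ?thesis by (simp add: I_count_V V_zero aa_0)
next
  case (Suc N)
  have "(of_nat (I_count n) :: rat) = (\<Sum>M'<Suc N. of_nat (cnt (Suc (Suc N)) M' (Suc N)))"
    unfolding I_count_V Suc using card_V[of "Suc N"] by (simp add: of_nat_sum)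
  also have "\<dots> = (\<Sum>M'<Suc N. (aa X * cc X ^ (N - M')) $ N)"
    by (rule sum.cong) (auto simp: cnt_formula[OF assms] FF_def)
  also have "\<dots> = (aa X * ww X * cc X ^ 0) $ N"
    using trunc[where K="Suc N" and N=N and f="aa X" and X=X] by simp
  also have "\<dots> = aa X $ n" using Suc by (simp add: aa_Suc)
  finally show ?thesis .
qed




definition GG :: "rat fps \<Rightarrow> rat fps" where
  "GG f = 1 + fps_X * (1 - f + 2 * f^2 - fps_X * f^3)"

definition agree :: "nat \<Rightarrow> rat fps \<Rightarrow> rat fps \<Rightarrow> bool" where
  "agree m f g \<longleftrightarrow> (\<forall>i<m. f $ i = g $ i)"

lemma agree_refl: "agree m f f" unfolding agree_def by simp

lemma agree_add: "agree m f g \<Longrightarrow> agree m f' g' \<Longrightarrow> agree m (f + f') (g + g')"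
  unfolding agree_def by simp

lemma agree_diff: "agree m f g \<Longrightarrow> agree m f' g' \<Longrightarrow> agree m (f - f') (g - g')"
  unfolding agree_def by simp

lemma agree_mult: "agree m f g \<Longrightarrow> agree m f' g' \<Longrightarrow> agree m (f * f') (g * g')"
  unfolding agree_def fps_mult_nth
  by (auto intro!: sum.cong)

lemma agree_power: "agree m f g \<Longrightarrow> agree m (f ^ k) (g ^ k)"
  by (induction k) (auto intro: agree_mult agree_refl)

lemma agree_X: "agree m f g \<Longrightarrow> agree m (fps_X * f) (fps_X * g)"
  unfolding agree_def by auto

lemma GG_contr: "agree m f g \<Longrightarrow> agree (Suc m) (GG f) (GG g)"
proof -
  assume a: "agree m f g"
  have h: "agree m (1 - f + 2 * f^2 - fps_X * f^3) (1 - g + 2 * g^2 - fps_X * g^3)"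
    by (intro agree_diff agree_add agree_mult agree_power agree_X agree_refl a)
  show ?thesis unfolding agree_def GG_def
  proof (intro allI impI)
    fix i assume "i < Suc m"
    thus "(1 + fps_X * (1 - f + 2 * f\<^sup>2 - fps_X * f ^ 3)) $ i =
          (1 + fps_X * (1 - g + 2 * g\<^sup>2 - fps_X * g ^ 3)) $ i"
      using h unfolding agree_def by (cases i) auto
  qed
qed

lemma GG_unique:
  assumes "X = GG X" "Y = GG Y"
  shows "X = Y"
proof -
  have "agree m X Y" for m
  proof (induction m)
    case 0
    then show ?case unfolding agree_def by simp
  next
    case (Suc m)
    then show ?case using GG_contr[OF Suc] assms by simp
  qed
  thus ?thesis unfolding agree_def by (auto simp: fps_eq_iff)
qed

definition Xs :: "nat \<Rightarrow> rat fps" where "Xs k = (GG ^^ k) 0"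

lemma Xs_agree: "agree k (Xs k) (Xs (k + d))"
proof (induction k)
  case 0
  then show ?case unfolding agree_def by simp
next
  case (Suc k)
  then show ?case using GG_contr[OF Suc] unfolding Xs_def by simp
qed

definition Xl :: "rat fps" where "Xl = Abs_fps (\<lambda>n. Xs (Suc n) $ n)"

lemma Xl_agree: "agree n Xl (Xs n)"
  unfolding agree_def
proof (intro allI impI)
  fix i assume "i < n"
  hence e: "n = Suc i + (n - Suc i)" by simp
  have "agree (Suc i) (Xs (Suc i)) (Xs (Suc i + (n - Suc i)))" by (rule Xs_agree)
  hence "Xs (Suc i) $ i = Xs n $ i" using e unfolding agree_def by (metis lessI)
  thus "Xl $ i = Xs n $ i" unfolding Xl_def by simp
qed

lemma Xl_fix: "GG Xl = Xl"
proof -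
  have "(GG Xl) $ n = Xl $ n" for n
  proof -
    have "agree (Suc n) (GG Xl) (GG (Xs n))" by (rule GG_contr[OF Xl_agree])
    hence "(GG Xl) $ n = GG (Xs n) $ n" unfolding agree_def by simp
    also have "\<dots> = Xs (Suc n) $ n" unfolding Xs_def by simp
    finally show ?thesis unfolding Xl_def by simp
  qed
  thus ?thesis by (simp add: fps_eq_iff)
qed

lemma X_eq_GG: "X_eq X \<longleftrightarrow> X = GG X"
  unfolding X_eq_G GG_def ..

lemma ex1_X: "\<exists>!X. X_eq X"
  unfolding X_eq_GG using Xl_fix GG_unique by metis

lemma final_frac:
  assumes "X_eq X"
  shows "((1 + fps_X) * (X - 1) - fps_X * (1 - fps_X) * X^2) / (fps_X * (1 + fps_X) * X) = aa X"
proof -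
  let ?num = "(1 + fps_X) * (X - 1) - fps_X * (1 - fps_X) * X^2"
  let ?den = "fps_X * (1 + fps_X) * X :: rat fps"
  let ?D = "1 - cc X - fps_X"
  have X0: "X $ 0 = 1"
    using arg_cong[OF iffD1[OF X_eq_GG assms], of "\<lambda>f. f $ 0"] by (simp add: GG_def)
  have p0: "(1 + fps_X :: rat fps) \<noteq> 0"
  proof
    assume "(1 + fps_X :: rat fps) = 0"
    hence "(1 + fps_X :: rat fps) $ 0 = 0" by simp
    thus False by simp
  qed
  have Xn0: "X \<noteq> 0" using X0 by auto
  have den0: "?den \<noteq> 0" using p0 Xn0 by simp
  have "?num * ?D - (1 - cc X) * ?den
     = (fps_X - 1) * (1 - X + fps_X - fps_X * X + 2 * fps_X * X^2 - fps_X^2 * X^3)"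
    unfolding cc_def by (simp add: algebra_simps power2_eq_square power3_eq_cube)
  hence nd: "?num * ?D = (1 - cc X) * ?den" using assms unfolding X_eq_def by simp
  have "?D $ 0 \<noteq> 0" unfolding cc_def by simp
  hence DI: "?D * inverse ?D = 1" by (rule inverse_mult_eq_1')
  have "?num = ?num * (?D * inverse ?D)" unfolding DI by simp
  also have "\<dots> = (1 - cc X) * ?den * inverse ?D" by (simp only: mult.assoc[symmetric] nd)
  also have "\<dots> = aa X * ?den" unfolding aa_def by (simp add: mult_ac)
  finally have "?num = aa X * ?den" .
  thus ?thesis using den0 by simp
qed

theorem mainTheorem7:
  shows "(\<exists>!X. X_eq X) \<and>
    (\<forall>X. X_eq X \<longrightarrow>
       Abs_fps (\<lambda>n. of_nat (I_count n) :: rat) =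
       ((1 + fps_X) * (X - 1) - fps_X * (1 - fps_X) * X^2) / (fps_X * (1 + fps_X) * X))"
proof (intro conjI allI impI)
  show "\<exists>!X. X_eq X" by (rule ex1_X)
  fix X assume a: "X_eq X"
  have "Abs_fps (\<lambda>n. of_nat (I_count n) :: rat) = aa X"
    by (simp add: fps_eq_iff I_count_coeff[OF a])
  thus "Abs_fps (\<lambda>n. of_nat (I_count n) :: rat) =
       ((1 + fps_X) * (X - 1) - fps_X * (1 - fps_X) * X^2) / (fps_X * (1 + fps_X) * X)"
    using final_frac[OF a] by simp
qed


end
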